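(* Let $A,B$ be mutually avoiding point sets with $A\cup B$ in general position, let $x_1\prec x_2\prec\cdots\prec x_n$ be points of $A$ and $y_1\prec y_2\prec\cdots\prec y_n$ be points of $B$. Then the straight-line drawing of the ladder graph formed by the paths $x_1x_2\cdots x_n$ and $y_1y_2\cdots y_n$ and the edges $x_iy_i$, $i\in[n]$, is non-crossing.
   Context: Two finite point sets $A,B\subset\mathbb{R}^2$ are mutually avoiding if $|A|,|B|\ge2$, no line through two points of $A$ intersects the convex hull of $B$, and no line through two points of $B$ intersects the convex hull of $A$. For such a pair there are unique total orders $\prec$ on $A$ and on $B$ such that every point of $B$ sees the points of $A$ consecutively in clockwise order according to $\prec$, and every point of $A$ sees the points of $B$ consecutively in counterclockwise order according to $\prec$. Non-crossing means no two edge segments share a point other than a common endpoint. *)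

theory Defs
  imports "HOL-Analysis.Analysis"
begin

type_synonym point = "real \<times> real"

text \<open>Orientation determinant: positive iff p, q, r make a counterclockwise turn.\<close>
definition orient :: "point \<Rightarrow> point \<Rightarrow> point \<Rightarrow> real" where
  "orient p q r = (fst q - fst p) * (snd r - snd p) - (snd q - snd p) * (fst r - fst p)"

definition general_position :: "point set \<Rightarrow> bool" where
  "general_position S \<longleftrightarrow>
     (\<forall>p\<in>S. \<forall>q\<in>S. \<forall>r\<in>S. p \<noteq> q \<and> p \<noteq> r \<and> q \<noteq> r \<longrightarrow> orient p q r \<noteq> 0)"

definition mutually_avoiding :: "point set \<Rightarrow> point set \<Rightarrow> bool" where
  "mutually_avoiding A B \<longleftrightarrow>
     finite A \<and> finite B \<and> card A \<ge> 2 \<and> card B \<ge> 2 \<and>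
     (\<forall>a1\<in>A. \<forall>a2\<in>A. a1 \<noteq> a2 \<longrightarrow> affine hull {a1, a2} \<inter> convex hull B = {}) \<and>
     (\<forall>b1\<in>B. \<forall>b2\<in>B. b1 \<noteq> b2 \<longrightarrow> affine hull {b1, b2} \<inter> convex hull A = {})"

definition precA :: "point set \<Rightarrow> point set \<Rightarrow> point \<Rightarrow> point \<Rightarrow> bool" where
  "precA A B a a' \<longleftrightarrow> a \<in> A \<and> a' \<in> A \<and> (\<forall>b\<in>B. orient b a a' < 0)"

definition precB :: "point set \<Rightarrow> point set \<Rightarrow> point \<Rightarrow> point \<Rightarrow> bool" where
  "precB A B b b' \<longleftrightarrow> b \<in> B \<and> b' \<in> B \<and> (\<forall>a\<in>A. orient a b b' > 0)"

definition ladder_edges :: "nat \<Rightarrow> (nat \<Rightarrow> point) \<Rightarrow> (nat \<Rightarrow> point) \<Rightarrow> (point \<times> point) set" where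
  "ladder_edges n x y =
     {(x i, x (Suc i)) | i. 1 \<le> i \<and> i < n} \<union>
     {(y i, y (Suc i)) | i. 1 \<le> i \<and> i < n} \<union>
     {(x i, y i) | i. 1 \<le> i \<and> i \<le> n}"

definition non_crossing :: "(point \<times> point) set \<Rightarrow> bool" where
  "non_crossing E \<longleftrightarrow>
     (\<forall>(p, q)\<in>E. \<forall>(r, s)\<in>E. {p, q} \<noteq> {r, s} \<longrightarrow>
        closed_segment p q \<inter> closed_segment r s \<subseteq> {p, q} \<inter> {r, s})"

end

theory Submission
  imports Defs
begin

lemma orient_cyc: "orient p q r = orient q r p" unfolding orient_def by algebra
lemma orient_swap: "orient p q r = - orient q p r" unfolding orient_def by algebra
lemma orient_swap23: "orient p q r = - orient p r q" unfolding orient_def by algebra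
lemma orient_self1: "orient p q p = 0" unfolding orient_def by algebra
lemma orient_self2: "orient p q q = 0" unfolding orient_def by algebra
lemma orient_same: "orient b p p = 0" unfolding orient_def by algebra

lemma orient_seg:
  assumes "z \<in> closed_segment r s"
  obtains u where "0 \<le> u" "u \<le> 1" "orient p q z = (1-u) * orient p q r + u * orient p q s"
proof -
  obtain u where u: "0 \<le> u" "u \<le> 1" "z = (1-u) *\<^sub>R r + u *\<^sub>R s"
    using assms by (auto simp: in_segment)
  have "orient p q z = (1-u) * orient p q r + u * orient p q s"
    unfolding u(3) orient_def by (simp add: algebra_simps)
  with u that show ?thesis by blast
qed

definition ok :: "point \<Rightarrow> point \<Rightarrow> point \<Rightarrow> point \<Rightarrow> bool" where
  "ok p q r s \<longleftrightarrow> ({p,q} \<noteq> {r,s} \<longrightarrow> closed_segment p q \<inter> closed_segment r s \<subseteq> {p,q} \<inter> {r,s})"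

lemma ok_sym: "ok p q r s \<Longrightarrow> ok r s p q" unfolding ok_def by blast
lemma ok_comm1: "ok p q r s \<Longrightarrow> ok q p r s" unfolding ok_def by (simp add: closed_segment_commute insert_commute)
lemma ok_comm2: "ok p q r s \<Longrightarrow> ok p q s r" unfolding ok_def by (simp add: closed_segment_commute insert_commute)
lemma ok_refl: "ok p q p q" unfolding ok_def by simp

lemma ok_sep:
  assumes "orient u v p > 0" "orient u v q > 0" "orient u v r \<le> 0" "orient u v s \<le> 0"
  shows "ok p q r s"
proof -
  have "closed_segment p q \<inter> closed_segment r s = {}"
  proof (rule ccontr)
    assume "closed_segment p q \<inter> closed_segment r s \<noteq> {}"
    then obtain z where z: "z \<in> closed_segment p q" "z \<in> closed_segment r s" by blast
    obtain t where t: "0 \<le> t" "t \<le> 1" "orient u v z = (1-t) * orient u v p + t * orient u v q"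
      using orient_seg[OF z(1)] by blast
    obtain w where w: "0 \<le> w" "w \<le> 1" "orient u v z = (1-w) * orient u v r + w * orient u v s"
      using orient_seg[OF z(2)] by blast
    have "(1-t) * orient u v p + t * orient u v q > 0"
    proof (cases "t = 1")
      case True thus ?thesis using assms by simp
    next
      case False
      hence "(1-t) * orient u v p > 0" using t assms by simp
      moreover have "t * orient u v q \<ge> 0" using t assms by simp
      ultimately show ?thesis by linarith
    qed
    moreover have "(1-w) * orient u v r + w * orient u v s \<le> 0"
    proof -
      have "(1-w) * orient u v r \<le> 0" using w assms by (simp add: mult_nonneg_nonpos)
      moreover have "w * orient u v s \<le> 0" using w assms by (simp add: mult_nonneg_nonpos)
      ultimately show ?thesis by linarith
    qed
    ultimately show False using t w by linarith
  qed
  thus ?thesis unfolding ok_def by blast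
qed

lemma ok_sep':
  assumes "orient u v p < 0" "orient u v q < 0" "orient u v r \<ge> 0" "orient u v s \<ge> 0"
  shows "ok p q r s"
  using assms by (intro ok_sep[of v u]) (auto simp: orient_swap[of v u])

lemma ok_share:
  assumes "orient p q s \<noteq> 0"
  shows "ok p q p s"
proof -
  have "closed_segment p q \<inter> closed_segment p s \<subseteq> {p}"
  proof
    fix z assume z: "z \<in> closed_segment p q \<inter> closed_segment p s"
    obtain t where t: "orient p q z = (1-t) * orient p q p + t * orient p q q"
      using orient_seg[of z p q p q] z by blast
    have z0: "orient p q z = 0" using t by (simp add: orient_self1 orient_self2)
    obtain u where u: "0 \<le> u" "u \<le> 1" "z = (1-u) *\<^sub>R p + u *\<^sub>R s"
      using z by (auto simp: in_segment)
    have "orient p q z = u * orient p q s"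
      unfolding u(3) orient_def by (simp add: algebra_simps)
    hence "u = 0" using z0 assms by simp
    thus "z \<in> {p}" using u by simp
  qed
  thus ?thesis unfolding ok_def by blast
qed

lemma in_line:
  assumes "a1 \<noteq> a2" "orient a1 a2 z = 0"
  shows "z \<in> affine hull {a1, a2}"
proof -
  define d1 where "d1 = fst a2 - fst a1"
  define d2 where "d2 = snd a2 - snd a1"
  define w1 where "w1 = fst z - fst a1"
  define w2 where "w2 = snd z - snd a1"
  have nz: "d1^2 + d2^2 \<noteq> 0" using assms(1) unfolding d1_def d2_def
    by (auto simp: prod_eq_iff sum_power2_eq_zero_iff)
  have o: "d1 * w2 - d2 * w1 = 0" using assms(2) unfolding orient_def d1_def d2_def w1_def w2_def by simp
  define t where "t = (d1*w1 + d2*w2)/(d1^2+d2^2)"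
  have e1: "w1 = t * d1"
  proof -
    have "w1 * (d1^2+d2^2) = (d1*w1 + d2*w2) * d1"
      using o by (simp add: power2_eq_square algebra_simps)
    thus ?thesis unfolding t_def using nz by (simp add: field_simps)
  qed
  have e2: "w2 = t * d2"
  proof -
    have "w2 * (d1^2+d2^2) = (d1*w1 + d2*w2) * d2"
      using o by (simp add: power2_eq_square algebra_simps)
    thus ?thesis unfolding t_def using nz by (simp add: field_simps)
  qed
  have "z = (1-t) *\<^sub>R a1 + t *\<^sub>R a2"
    using e1 e2 unfolding d1_def d2_def w1_def w2_def
    by (simp add: prod_eq_iff algebra_simps)
  thus ?thesis unfolding affine_hull_2 by force
qed

lemma same_side:
  assumes "\<forall>s1\<in>S. \<forall>s2\<in>S. s1 \<noteq> s2 \<longrightarrow> affine hull {s1, s2} \<inter> convex hull T = {}"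
    and "s1 \<in> S" "s2 \<in> S" "s1 \<noteq> s2" "t \<in> T" "t' \<in> T"
  shows "orient s1 s2 t * orient s1 s2 t' > 0"
proof (rule ccontr)
  let ?f = "orient s1 s2"
  assume "\<not> ?thesis"
  hence le: "?f t * ?f t' \<le> 0" by simp
  have dis: "affine hull {s1, s2} \<inter> convex hull T = {}" using assms by blast
  have "\<exists>z \<in> closed_segment t t'. ?f z = 0"
  proof (cases "?f t = 0")
    case True thus ?thesis by auto
  next
    case False
    have ne: "?f t - ?f t' \<noteq> 0"
    proof
      assume "?f t - ?f t' = 0" hence "?f t' = ?f t" by simp
      with le False show False by (simp add: mult_le_0_iff) (smt (verit))
    qed
    define u where "u = ?f t / (?f t - ?f t')"
    have u01: "0 \<le> u \<and> u \<le> 1"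
      using le ne False unfolding u_def
      by (auto simp: mult_le_0_iff divide_simps split: if_splits)
    define z where "z = (1-u) *\<^sub>R t + u *\<^sub>R t'"
    have "?f z = (1-u) * ?f t + u * ?f t'"
      unfolding z_def orient_def by (simp add: algebra_simps)
    also have "\<dots> = 0" unfolding u_def using ne by (simp add: field_simps)
    finally have "?f z = 0" .
    moreover have "z \<in> closed_segment t t'" unfolding z_def in_segment using u01 by blast
    ultimately show ?thesis by blast
  qed
  then obtain z where z: "z \<in> closed_segment t t'" "?f z = 0" by blast
  have "z \<in> convex hull T"
    using z(1) assms(5,6) by (meson closed_segment_subset convex_convex_hull hull_inc subsetD)
  moreover have "z \<in> affine hull {s1, s2}" using in_line[OF assms(4) z(2)] .
  ultimately show False using dis by blast
qed

lemma trans_gen: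
  assumes "orient b c p * orient b c q > 0" "orient b c q * orient b c r > 0"
    "orient b p q < 0" "orient b q r < 0"
  shows "orient b p r < 0"
proof -
  have id: "orient b p q * orient b c r + orient b q r * orient b c p + orient b r p * orient b c q = 0"
    unfolding orient_def by algebra
  have rp: "orient b r p = - orient b p r" unfolding orient_def by algebra
  from assms(1,2) have "(orient b c p > 0 \<and> orient b c q > 0 \<and> orient b c r > 0) \<or>
     (orient b c p < 0 \<and> orient b c q < 0 \<and> orient b c r < 0)"
    by (auto simp: zero_less_mult_iff)
  thus ?thesis
  proof
    assume h: "orient b c p > 0 \<and> orient b c q > 0 \<and> orient b c r > 0"
    have "orient b p q * orient b c r < 0" using h assms by (simp add: mult_neg_pos)
    moreover have "orient b q r * orient b c p < 0" using h assms by (simp add: mult_neg_pos)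
    ultimately have "orient b r p * orient b c q > 0" using id by linarith
    hence "orient b r p > 0" using h by (simp add: zero_less_mult_iff)
    thus ?thesis using rp by simp
  next
    assume h: "orient b c p < 0 \<and> orient b c q < 0 \<and> orient b c r < 0"
    have "orient b p q * orient b c r > 0" using h assms by (simp add: mult_neg_neg)
    moreover have "orient b q r * orient b c p > 0" using h assms by (simp add: mult_neg_neg)
    ultimately have "orient b r p * orient b c q < 0" using id by linarith
    hence "orient b r p > 0" using h by (simp add: mult_less_0_iff)
    thus ?thesis using rp by simp
  qed
qed

lemma other_elem:
  assumes "finite S" "card S \<ge> 2" "s \<in> S"
  obtains s' where "s' \<in> S" "s' \<noteq> s"
proof -
  have "\<not> S \<subseteq> {s}" using assms by (metis card.empty card.insert empty_iff finite.intros(1) card_mono not_numeral_le_zero One_nat_def le_antisym numeral_le_one_iff semiring_norm(69) subset_singletonD)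
  thus ?thesis using that by blast
qed

lemma precA_trans:
  assumes "mutually_avoiding A B" "precA A B p q" "precA A B q r"
  shows "precA A B p r"
  unfolding precA_def
proof (intro conjI ballI)
  show "p \<in> A" "r \<in> A" using assms unfolding precA_def by auto
  have qA: "q \<in> A" using assms unfolding precA_def by auto
  fix b assume b: "b \<in> B"
  obtain c where c: "c \<in> B" "c \<noteq> b" using other_elem[of B b] assms(1) b unfolding mutually_avoiding_def by blast
  have ss: "\<forall>s1\<in>B. \<forall>s2\<in>B. s1 \<noteq> s2 \<longrightarrow> affine hull {s1, s2} \<inter> convex hull A = {}"
    using assms(1) unfolding mutually_avoiding_def by blast
  show "orient b p r < 0"
    apply (rule trans_gen[of b c p q r])
    using same_side[OF ss b c(1) c(2)[symmetric]] assms qA \<open>p \<in> A\<close> \<open>r \<in> A\<close> b unfolding precA_def by auto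
qed

lemma precB_trans:
  assumes "mutually_avoiding A B" "precB A B p q" "precB A B q r"
  shows "precB A B p r"
  unfolding precB_def
proof (intro conjI ballI)
  show "p \<in> B" "r \<in> B" using assms unfolding precB_def by auto
  have qB: "q \<in> B" using assms unfolding precB_def by auto
  fix a assume a: "a \<in> A"
  obtain c where c: "c \<in> A" "c \<noteq> a" using other_elem[of A a] assms(1) a unfolding mutually_avoiding_def by blast
  have ss: "\<forall>s1\<in>A. \<forall>s2\<in>A. s1 \<noteq> s2 \<longrightarrow> affine hull {s1, s2} \<inter> convex hull B = {}"
    using assms(1) unfolding mutually_avoiding_def by blast
  have s1: "orient a c r * orient a c q > 0" "orient a c q * orient a c p > 0"
    using same_side[OF ss a c(1) c(2)[symmetric]] qB \<open>p \<in> B\<close> \<open>r \<in> B\<close> by auto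
  have "orient a p q > 0" "orient a q r > 0" using assms a unfolding precB_def by auto
  hence "orient a r q < 0" "orient a q p < 0" using orient_swap23[of a r q] orient_swap23[of a q p] by auto
  have "orient a r p < 0"
    by (rule trans_gen[OF s1]) fact+
  thus "orient a p r > 0" using orient_swap23[of a r p] by simp
qed

theorem mainTheorem9:
  fixes A B :: "point set" and n :: nat and x y :: "nat \<Rightarrow> point"
  assumes "mutually_avoiding A B"
    and "general_position (A \<union> B)"
    and "\<forall>i\<in>{1..n}. x i \<in> A \<and> y i \<in> B"
    and "\<forall>i. 1 \<le> i \<and> i < n \<longrightarrow> precA A B (x i) (x (Suc i))"
    and "\<forall>i. 1 \<le> i \<and> i < n \<longrightarrow> precB A B (y i) (y (Suc i))"
  shows "non_crossing (ladder_edges n x y)"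
proof -
  note MA = assms(1)
  have ssA: "\<forall>s1\<in>A. \<forall>s2\<in>A. s1 \<noteq> s2 \<longrightarrow> affine hull {s1, s2} \<inter> convex hull B = {}"
    using MA unfolding mutually_avoiding_def by blast
  have xA: "\<And>i. 1 \<le> i \<Longrightarrow> i \<le> n \<Longrightarrow> x i \<in> A" using assms(3) by auto
  have yB: "\<And>i. 1 \<le> i \<Longrightarrow> i \<le> n \<Longrightarrow> y i \<in> B" using assms(3) by auto
  have chainX: "\<And>d i. 1 \<le> i \<Longrightarrow> i + Suc d \<le> n \<Longrightarrow> precA A B (x i) (x (i + Suc d))"
  proof -
    fix d i show "1 \<le> i \<Longrightarrow> i + Suc d \<le> n \<Longrightarrow> precA A B (x i) (x (i + Suc d))"
    proof (induction d)
      case 0 thus ?case using assms(4) by simp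
    next
      case (Suc d)
      hence "precA A B (x i) (x (i + Suc d))" by simp
      moreover have "precA A B (x (i + Suc d)) (x (Suc (i + Suc d)))" using assms(4) Suc.prems by simp
      ultimately show ?case using precA_trans[OF MA] by (metis add_Suc_right)
    qed
  qed
  have ordX: "\<And>i j. 1 \<le> i \<Longrightarrow> i < j \<Longrightarrow> j \<le> n \<Longrightarrow> precA A B (x i) (x j)"
  proof -
    fix i j assume h: "1 \<le> i" "i < j" "j \<le> n"
    obtain d where d: "j = i + Suc d" using h(2) less_iff_Suc_add by auto
    show "precA A B (x i) (x j)" using chainX[of i d] h unfolding d by simp
  qed
  have chainY: "\<And>d i. 1 \<le> i \<Longrightarrow> i + Suc d \<le> n \<Longrightarrow> precB A B (y i) (y (i + Suc d))"
  proof -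
    fix d i show "1 \<le> i \<Longrightarrow> i + Suc d \<le> n \<Longrightarrow> precB A B (y i) (y (i + Suc d))"
    proof (induction d)
      case 0 thus ?case using assms(5) by simp
    next
      case (Suc d)
      hence "precB A B (y i) (y (i + Suc d))" by simp
      moreover have "precB A B (y (i + Suc d)) (y (Suc (i + Suc d)))" using assms(5) Suc.prems by simp
      ultimately show ?case using precB_trans[OF MA] by (metis add_Suc_right)
    qed
  qed
  have ordY: "\<And>i j. 1 \<le> i \<Longrightarrow> i < j \<Longrightarrow> j \<le> n \<Longrightarrow> precB A B (y i) (y j)"
  proof -
    fix i j assume h: "1 \<le> i" "i < j" "j \<le> n"
    obtain d where d: "j = i + Suc d" using h(2) less_iff_Suc_add by auto
    show "precB A B (y i) (y j)" using chainY[of i d] h unfolding d by simp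
  qed
  have disj: "A \<inter> B = {}"
  proof (rule ccontr)
    assume "A \<inter> B \<noteq> {}"
    then obtain z where z: "z \<in> A" "z \<in> B" by blast
    have fA: "finite A" "card A \<ge> 2" using MA unfolding mutually_avoiding_def by auto
    obtain a where a: "a \<in> A" "a \<noteq> z" using other_elem[OF fA z(1)] by blast
    have "z \<in> affine hull {z, a}" by (simp add: hull_inc)
    moreover have "z \<in> convex hull B" using z by (simp add: hull_inc)
    moreover have "affine hull {z, a} \<inter> convex hull B = {}" using ssA z(1) a by metis
    ultimately show False by blast
  qed
  have gp: "\<And>p q r. p \<in> A \<union> B \<Longrightarrow> q \<in> A \<union> B \<Longrightarrow> r \<in> A \<union> B \<Longrightarrow> p \<noteq> q \<Longrightarrow> p \<noteq> r \<Longrightarrow> q \<noteq> r \<Longrightarrow> orient p q r \<noteq> 0"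
    using assms(2) unfolding general_position_def by blast
  have "card B \<ge> 2" "card A \<ge> 2" using MA unfolding mutually_avoiding_def by auto
  hence "B \<noteq> {}" "A \<noteq> {}" by auto
  then obtain b0 a0 where b0: "b0 \<in> B" and a0: "a0 \<in> A" by blast
  have oX: "\<And>i j. 1 \<le> i \<Longrightarrow> i < j \<Longrightarrow> j \<le> n \<Longrightarrow> orient b0 (x i) (x j) < 0"
    using ordX b0 unfolding precA_def by blast
  have oY: "\<And>i j. 1 \<le> i \<Longrightarrow> i < j \<Longrightarrow> j \<le> n \<Longrightarrow> orient a0 (y i) (y j) > 0"
    using ordY a0 unfolding precB_def by blast
  have xne: "\<And>i j. 1 \<le> i \<Longrightarrow> i < j \<Longrightarrow> j \<le> n \<Longrightarrow> x i \<noteq> x j"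
  proof -
    fix i j assume h: "1 \<le> i" "i < j" "j \<le> n"
    have "orient b0 (x i) (x j) \<noteq> 0" using oX[OF h] by simp
    thus "x i \<noteq> x j" using orient_same by metis
  qed
  have yne: "\<And>i j. 1 \<le> i \<Longrightarrow> i < j \<Longrightarrow> j \<le> n \<Longrightarrow> y i \<noteq> y j"
  proof -
    fix i j assume h: "1 \<le> i" "i < j" "j \<le> n"
    have "orient a0 (y i) (y j) \<noteq> 0" using oY[OF h] by simp
    thus "y i \<noteq> y j" using orient_same by metis
  qed
  have xyne: "\<And>i j. 1 \<le> i \<Longrightarrow> i \<le> n \<Longrightarrow> 1 \<le> j \<Longrightarrow> j \<le> n \<Longrightarrow> x i \<noteq> y j"
  proof -
    fix i j assume h: "1 \<le> i" "i \<le> n" "1 \<le> j" "j \<le> n"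
    have h1: "x i \<in> A" using xA[OF h(1,2)] .
    have h2: "y j \<in> B" using yB[OF h(3,4)] .
    show "x i \<noteq> y j"
    proof
      assume "x i = y j" thus False using h1 h2 disj by auto
    qed
  qed

  have XX: "\<And>i j. 1 \<le> i \<Longrightarrow> i < j \<Longrightarrow> j < n \<Longrightarrow> ok (x i) (x (Suc i)) (x j) (x (Suc j))"
  proof -
    fix i j assume h: "1 \<le> i" "i < j" "j < n"
    show "ok (x i) (x (Suc i)) (x j) (x (Suc j))"
    proof (cases "j = Suc i")
      case True
      have "orient (x (Suc i)) (x i) (x (Suc (Suc i))) \<noteq> 0"
        apply (rule gp) using h True xA[of i] xA[of "Suc i"] xA[of "Suc (Suc i)"] xne[of i "Suc i"] xne[of i "Suc (Suc i)"] xne[of "Suc i" "Suc (Suc i)"] by auto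
      from ok_comm1[OF ok_share[OF this]] show ?thesis using True by simp
    next
      case False
      show ?thesis
      proof (rule ok_sep[of b0 "x j"])
        show "orient b0 (x j) (x i) > 0" using oX[of i j] h orient_swap23[of b0 "x j" "x i"] by simp
        show "orient b0 (x j) (x (Suc i)) > 0" using oX[of "Suc i" j] h False orient_swap23[of b0 "x j" "x (Suc i)"] by simp
        show "orient b0 (x j) (x j) \<le> 0" by (simp add: orient_self2)
        show "orient b0 (x j) (x (Suc j)) \<le> 0" using oX[of j "Suc j"] h by simp
      qed
    qed
  qed
  have YY: "\<And>i j. 1 \<le> i \<Longrightarrow> i < j \<Longrightarrow> j < n \<Longrightarrow> ok (y i) (y (Suc i)) (y j) (y (Suc j))"
  proof -
    fix i j assume h: "1 \<le> i" "i < j" "j < n"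
    show "ok (y i) (y (Suc i)) (y j) (y (Suc j))"
    proof (cases "j = Suc i")
      case True
      have "orient (y (Suc i)) (y i) (y (Suc (Suc i))) \<noteq> 0"
        apply (rule gp) using h True yB[of i] yB[of "Suc i"] yB[of "Suc (Suc i)"] yne[of i "Suc i"] yne[of i "Suc (Suc i)"] yne[of "Suc i" "Suc (Suc i)"] by auto
      from ok_comm1[OF ok_share[OF this]] show ?thesis using True by simp
    next
      case False
      show ?thesis
      proof (rule ok_sep'[of a0 "y j"])
        show "orient a0 (y j) (y i) < 0" using oY[of i j] h orient_swap23[of a0 "y j" "y i"] by simp
        show "orient a0 (y j) (y (Suc i)) < 0" using oY[of "Suc i" j] h False orient_swap23[of a0 "y j" "y (Suc i)"] by simp
        show "orient a0 (y j) (y j) \<ge> 0" by (simp add: orient_self2)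
        show "orient a0 (y j) (y (Suc j)) \<ge> 0" using oY[of j "Suc j"] h by simp
      qed
    qed
  qed
  have RR: "\<And>i j. 1 \<le> i \<Longrightarrow> i < j \<Longrightarrow> j \<le> n \<Longrightarrow> ok (x i) (y i) (x j) (y j)"
  proof -
    fix i j assume h: "1 \<le> i" "i < j" "j \<le> n"
    have p1: "orient (y j) (x i) (x j) < 0" using ordX[OF h] yB[of j] h unfolding precA_def by auto
    have p2: "orient (x j) (y i) (y j) > 0" using ordY[OF h] xA[of j] h unfolding precB_def by auto
    show "ok (x i) (y i) (x j) (y j)"
    proof (rule ok_sep'[of "x j" "y j"])
      show "orient (x j) (y j) (x i) < 0" using p1 orient_cyc[of "x j" "y j" "x i"] by simp
      show "orient (x j) (y j) (y i) < 0"
        using p2 orient_cyc[of "y i" "x j" "y j"] orient_cyc[of "x j" "y j" "y i"] orient_swap[of "y i" "x j" "y j"] by simp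
      show "orient (x j) (y j) (x j) \<ge> 0" by (simp add: orient_self1)
      show "orient (x j) (y j) (y j) \<ge> 0" by (simp add: orient_self2)
    qed
  qed
  have XY: "\<And>i j. 1 \<le> i \<Longrightarrow> i < n \<Longrightarrow> 1 \<le> j \<Longrightarrow> j < n \<Longrightarrow> ok (x i) (x (Suc i)) (y j) (y (Suc j))"
  proof -
    fix i j assume h: "1 \<le> i" "i < n" "1 \<le> j" "j < n"
    have "orient (x i) (x (Suc i)) (y j) * orient (x i) (x (Suc i)) (y (Suc j)) > 0"
      apply (rule same_side[OF ssA]) using h xA[of i] xA[of "Suc i"] yB[of j] yB[of "Suc j"] xne[of i "Suc i"] by auto
    hence c: "(orient (x i) (x (Suc i)) (y j) > 0 \<and> orient (x i) (x (Suc i)) (y (Suc j)) > 0) \<or>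
      (orient (x i) (x (Suc i)) (y j) < 0 \<and> orient (x i) (x (Suc i)) (y (Suc j)) < 0)"
      by (auto simp: zero_less_mult_iff)
    have z: "orient (x i) (x (Suc i)) (x i) = 0" "orient (x i) (x (Suc i)) (x (Suc i)) = 0"
      by (simp_all add: orient_self1 orient_self2)
    from c show "ok (x i) (x (Suc i)) (y j) (y (Suc j))"
    proof
      assume "orient (x i) (x (Suc i)) (y j) > 0 \<and> orient (x i) (x (Suc i)) (y (Suc j)) > 0"
      thus ?thesis using ok_sym[OF ok_sep[of "x i" "x (Suc i)"]] z by simp
    next
      assume "orient (x i) (x (Suc i)) (y j) < 0 \<and> orient (x i) (x (Suc i)) (y (Suc j)) < 0"
      thus ?thesis using ok_sym[OF ok_sep'[of "x i" "x (Suc i)"]] z by simp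
    qed
  qed
  have XR: "\<And>i k. 1 \<le> i \<Longrightarrow> i < n \<Longrightarrow> 1 \<le> k \<Longrightarrow> k \<le> n \<Longrightarrow> ok (x i) (x (Suc i)) (x k) (y k)"
  proof -
    fix i k assume h: "1 \<le> i" "i < n" "1 \<le> k" "k \<le> n"
    consider "k = i" | "k = Suc i" | "k < i" | "Suc i < k" by linarith
    thus "ok (x i) (x (Suc i)) (x k) (y k)"
    proof cases
      case 1
      have "orient (x i) (x (Suc i)) (y i) \<noteq> 0"
        apply (rule gp) using h xA[of i] xA[of "Suc i"] xA[of "Suc (Suc i)"] yB[of i] yB[of "Suc i"] yB[of "Suc (Suc i)"] xne[of i "Suc i"] xyne[of i i] xyne[of "Suc i" i] by auto
      thus ?thesis using ok_share 1 by simp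
    next
      case 2
      have "orient (x (Suc i)) (x i) (y (Suc i)) \<noteq> 0"
        apply (rule gp) using h xA[of i] xA[of "Suc i"] xA[of "Suc (Suc i)"] yB[of i] yB[of "Suc i"] yB[of "Suc (Suc i)"] xne[of i "Suc i"] xyne[of i "Suc i"] xyne[of "Suc i" "Suc i"] by auto
      thus ?thesis using ok_comm1[OF ok_share] 2 by simp
    next
      case 3
      have p1: "orient (y k) (x k) (x i) < 0" using ordX[of k i] yB[of k] h 3 unfolding precA_def by auto
      have p2: "orient (y k) (x k) (x (Suc i)) < 0" using ordX[of k "Suc i"] yB[of k] h 3 unfolding precA_def by auto
      show ?thesis
      proof (rule ok_sep[of "x k" "y k"])
        show "orient (x k) (y k) (x i) > 0" using p1 orient_swap[of "x k" "y k" "x i"] by simp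
        show "orient (x k) (y k) (x (Suc i)) > 0" using p2 orient_swap[of "x k" "y k" "x (Suc i)"] by simp
        show "orient (x k) (y k) (x k) \<le> 0" by (simp add: orient_self1)
        show "orient (x k) (y k) (y k) \<le> 0" by (simp add: orient_self2)
      qed
    next
      case 4
      have p1: "orient (y k) (x i) (x k) < 0" using ordX[of i k] yB[of k] h 4 unfolding precA_def by auto
      have p2: "orient (y k) (x (Suc i)) (x k) < 0" using ordX[of "Suc i" k] yB[of k] h 4 unfolding precA_def by auto
      show ?thesis
      proof (rule ok_sep'[of "x k" "y k"])
        show "orient (x k) (y k) (x i) < 0" using p1 orient_cyc[of "x k" "y k" "x i"] by simp
        show "orient (x k) (y k) (x (Suc i)) < 0" using p2 orient_cyc[of "x k" "y k" "x (Suc i)"] by simp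
        show "orient (x k) (y k) (x k) \<ge> 0" by (simp add: orient_self1)
        show "orient (x k) (y k) (y k) \<ge> 0" by (simp add: orient_self2)
      qed
    qed
  qed
  have YR: "\<And>i k. 1 \<le> i \<Longrightarrow> i < n \<Longrightarrow> 1 \<le> k \<Longrightarrow> k \<le> n \<Longrightarrow> ok (y i) (y (Suc i)) (x k) (y k)"
  proof -
    fix i k assume h: "1 \<le> i" "i < n" "1 \<le> k" "k \<le> n"
    consider "k = i" | "k = Suc i" | "k < i" | "Suc i < k" by linarith
    thus "ok (y i) (y (Suc i)) (x k) (y k)"
    proof cases
      case 1
      have "orient (y i) (y (Suc i)) (x i) \<noteq> 0"
        apply (rule gp) using h xA[of i] xA[of "Suc i"] xA[of "Suc (Suc i)"] yB[of i] yB[of "Suc i"] yB[of "Suc (Suc i)"] yne[of i "Suc i"] xyne[of i i] xyne[of i "Suc i"] by auto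
      thus ?thesis using ok_comm2[OF ok_share] 1 by simp
    next
      case 2
      have "orient (y (Suc i)) (y i) (x (Suc i)) \<noteq> 0"
        apply (rule gp) using h xA[of i] xA[of "Suc i"] xA[of "Suc (Suc i)"] yB[of i] yB[of "Suc i"] yB[of "Suc (Suc i)"] yne[of i "Suc i"] xyne[of "Suc i" i] xyne[of "Suc i" "Suc i"] by auto
      thus ?thesis using ok_comm1[OF ok_comm2[OF ok_share]] 2 by simp
    next
      case 3
      have p1: "orient (x k) (y k) (y i) > 0" using ordY[of k i] xA[of k] h 3 unfolding precB_def by auto
      have p2: "orient (x k) (y k) (y (Suc i)) > 0" using ordY[of k "Suc i"] xA[of k] h 3 unfolding precB_def by auto
      show ?thesis
      proof (rule ok_sep[of "x k" "y k"])
        show "orient (x k) (y k) (y i) > 0" by fact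
        show "orient (x k) (y k) (y (Suc i)) > 0" by fact
        show "orient (x k) (y k) (x k) \<le> 0" by (simp add: orient_self1)
        show "orient (x k) (y k) (y k) \<le> 0" by (simp add: orient_self2)
      qed
    next
      case 4
      have p1: "orient (x k) (y i) (y k) > 0" using ordY[of i k] xA[of k] h 4 unfolding precB_def by auto
      have p2: "orient (x k) (y (Suc i)) (y k) > 0" using ordY[of "Suc i" k] xA[of k] h 4 unfolding precB_def by auto
      show ?thesis
      proof (rule ok_sep'[of "x k" "y k"])
        show "orient (x k) (y k) (y i) < 0" using p1 orient_swap23[of "x k" "y k" "y i"] by simp
        show "orient (x k) (y k) (y (Suc i)) < 0" using p2 orient_swap23[of "x k" "y k" "y (Suc i)"] by simp
        show "orient (x k) (y k) (x k) \<ge> 0" by (simp add: orient_self1)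
        show "orient (x k) (y k) (y k) \<ge> 0" by (simp add: orient_self2)
      qed
    qed
  qed
  have XXa: "\<And>i j. 1 \<le> i \<Longrightarrow> i < n \<Longrightarrow> 1 \<le> j \<Longrightarrow> j < n \<Longrightarrow> ok (x i) (x (Suc i)) (x j) (x (Suc j))"
  proof -
    fix i j assume h: "1 \<le> i" "i < n" "1 \<le> j" "j < n"
    consider "i < j" | "i = j" | "j < i" by linarith
    thus "ok (x i) (x (Suc i)) (x j) (x (Suc j))"
    proof cases
      case 1 thus ?thesis using XX[of i j] h by simp
    next
      case 2 thus ?thesis by (simp add: ok_refl)
    next
      case 3 thus ?thesis using ok_sym[OF XX[of j i]] h by simp
    qed
  qed
  have YYa: "\<And>i j. 1 \<le> i \<Longrightarrow> i < n \<Longrightarrow> 1 \<le> j \<Longrightarrow> j < n \<Longrightarrow> ok (y i) (y (Suc i)) (y j) (y (Suc j))"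
  proof -
    fix i j assume h: "1 \<le> i" "i < n" "1 \<le> j" "j < n"
    consider "i < j" | "i = j" | "j < i" by linarith
    thus "ok (y i) (y (Suc i)) (y j) (y (Suc j))"
    proof cases
      case 1 thus ?thesis using YY[of i j] h by simp
    next
      case 2 thus ?thesis by (simp add: ok_refl)
    next
      case 3 thus ?thesis using ok_sym[OF YY[of j i]] h by simp
    qed
  qed
  have RRa: "\<And>i j. 1 \<le> i \<Longrightarrow> i \<le> n \<Longrightarrow> 1 \<le> j \<Longrightarrow> j \<le> n \<Longrightarrow> ok (x i) (y i) (x j) (y j)"
  proof -
    fix i j assume h: "1 \<le> i" "i \<le> n" "1 \<le> j" "j \<le> n"
    consider "i < j" | "i = j" | "j < i" by linarith
    thus "ok (x i) (y i) (x j) (y j)"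
    proof cases
      case 1 thus ?thesis using RR[of i j] h by simp
    next
      case 2 thus ?thesis by (simp add: ok_refl)
    next
      case 3 thus ?thesis using ok_sym[OF RR[of j i]] h by simp
    qed
  qed
  let ?E = "ladder_edges n x y"
  have all: "\<And>p q r s. (p, q) \<in> ?E \<Longrightarrow> (r, s) \<in> ?E \<Longrightarrow> ok p q r s"
  proof -
    fix p q r s assume e1: "(p, q) \<in> ?E" and e2: "(r, s) \<in> ?E"
    have EC: "\<And>p q. (p, q) \<in> ?E \<Longrightarrow> (\<exists>i. 1 \<le> i \<and> i < n \<and> p = x i \<and> q = x (Suc i)) \<or>
       (\<exists>i. 1 \<le> i \<and> i < n \<and> p = y i \<and> q = y (Suc i)) \<or> (\<exists>i. 1 \<le> i \<and> i \<le> n \<and> p = x i \<and> q = y i)"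
      unfolding ladder_edges_def by blast
    from EC[OF e1] show "ok p q r s"
    proof (elim disjE exE conjE)
      fix i assume i: "1 \<le> i" "i < n" "p = x i" "q = x (Suc i)"
      from EC[OF e2] show "ok p q r s"
      proof (elim disjE exE conjE)
        fix j assume j: "1 \<le> j" "j < n" "r = x j" "s = x (Suc j)"
        show ?thesis using XXa[of i j] i j by simp
      next
        fix j assume j: "1 \<le> j" "j < n" "r = y j" "s = y (Suc j)"
        show ?thesis using XY[of i j] i j by simp
      next
        fix j assume j: "1 \<le> j" "j \<le> n" "r = x j" "s = y j"
        show ?thesis using XR[of i j] i j by simp
      qed
    next
      fix i assume i: "1 \<le> i" "i < n" "p = y i" "q = y (Suc i)"
      from EC[OF e2] show "ok p q r s"
      proof (elim disjE exE conjE)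
        fix j assume j: "1 \<le> j" "j < n" "r = x j" "s = x (Suc j)"
        show ?thesis using ok_sym[OF XY[of j i]] i j by simp
      next
        fix j assume j: "1 \<le> j" "j < n" "r = y j" "s = y (Suc j)"
        show ?thesis using YYa[of i j] i j by simp
      next
        fix j assume j: "1 \<le> j" "j \<le> n" "r = x j" "s = y j"
        show ?thesis using YR[of i j] i j by simp
      qed
    next
      fix i assume i: "1 \<le> i" "i \<le> n" "p = x i" "q = y i"
      from EC[OF e2] show "ok p q r s"
      proof (elim disjE exE conjE)
        fix j assume j: "1 \<le> j" "j < n" "r = x j" "s = x (Suc j)"
        show ?thesis using ok_sym[OF XR[of j i]] i j by simp
      next
        fix j assume j: "1 \<le> j" "j < n" "r = y j" "s = y (Suc j)"
        show ?thesis using ok_sym[OF YR[of j i]] i j by simp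
      next
        fix j assume j: "1 \<le> j" "j \<le> n" "r = x j" "s = y j"
        show ?thesis using RRa[of i j] i j by simp
      qed
    qed
  qed
  have all2: "\<forall>(p, q)\<in>?E. \<forall>(r, s)\<in>?E. ok p q r s" using all by blast
  show ?thesis unfolding non_crossing_def ok_def[symmetric] by (rule all2)
qed

end
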